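(* For $n\ge1$ let \[\alpha_n=\inf\{s\in[-1,0):\ C_{a,R_n}(X)>0,\ C_{a,S_n}(X)>0,\ C_{a,T_n}(X)>0\ \text{for all }X\in(s,0)\}.\] Then $\alpha_{n+1}\le\alpha_n$ for all $n\ge1$. Moreover, $\alpha_{n+1}=\alpha_n$ if and only if one of the following holds: (a) $\alpha_m=-1$ for all $m\ge n$; in this case $C_a(X)>0$ for all $X\in(-1,1)$. (b) $\alpha_m=\alpha_n>-1$ for all $m\ge n$, and $C_{a,R_m}(\alpha_m)=C_{a,S_m}(\alpha_m)=C_{a,T_m}(\alpha_m)=0$ for all $m\ge n$; in this case $C_a(\alpha_n)=0$ and $C_a(X)>0$ for all $X\in(\alpha_n,1)$.
   Context: The Fibonacci substitution is $\sigma(a)=ab$, $\sigma(b)=a$; $w=w_0w_1\ldots=\lim_{m\to\infty}\sigma^m(a)$ is its fixed point starting with $a$, and $C_a(X)=\sum_{n\ge0}1_a(w_n)X^n$ (convergent for $|X|<1$). Let $A_n=\sigma^n(a)$, $B_n=\sigma^n(b)$, $R_n=A_{3n}B_{3n}$, $S_n=A_{3n}A_{3n}$, $T_n=B_{3n}A_{3n}$ (concatenations). For a finite word $u=u_0\cdots u_L$ over $\{a,b\}$, $C_{a,u}(X)=\sum_{i=0}^{L}1_a(u_i)X^i$, a polynomial evaluated at real $X$. *)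

theory Defs
  imports Complex_Main
begin

datatype letter = La | Lb

fun sigma_letter :: "letter \<Rightarrow> letter list" where
  "sigma_letter La = [La, Lb]"
| "sigma_letter Lb = [La]"

definition sigma :: "letter list \<Rightarrow> letter list" where
  "sigma u = concat (map sigma_letter u)"

definition fibA :: "nat \<Rightarrow> letter list" where
  "fibA n = (sigma ^^ n) [La]"

definition fibB :: "nat \<Rightarrow> letter list" where
  "fibB n = (sigma ^^ n) [Lb]"

definition fibR :: "nat \<Rightarrow> letter list" where
  "fibR n = fibA (3*n) @ fibB (3*n)"

definition fibS :: "nat \<Rightarrow> letter list" where
  "fibS n = fibA (3*n) @ fibA (3*n)"

definition fibT :: "nat \<Rightarrow> letter list" where
  "fibT n = fibB (3*n) @ fibA (3*n)"

text \<open>The fixed point w = lim sigma^m(a): since each A_m is a prefix of A_(m+1)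
  and length (A_(n+1)) > n, the n-th letter of w is the n-th letter of A_(n+1).\<close>
definition fibw :: "nat \<Rightarrow> letter" where
  "fibw n = fibA (Suc n) ! n"

definition ind_a :: "letter \<Rightarrow> real" where
  "ind_a c = (if c = La then 1 else 0)"

definition Ca :: "real \<Rightarrow> real" where
  "Ca X = (\<Sum>n. ind_a (fibw n) * X ^ n)"

definition Cau :: "letter list \<Rightarrow> real \<Rightarrow> real" where
  "Cau u X = (\<Sum>i<length u. ind_a (u ! i) * X ^ i)"

definition alpha :: "nat \<Rightarrow> real" where
  "alpha n = Inf {s \<in> {-1..<0}. \<forall>X\<in>{s<..<0}.
      Cau (fibR n) X > 0 \<and> Cau (fibS n) X > 0 \<and> Cau (fibT n) X > 0}"

end

theory Submission
  imports Defs
begin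
lemma sigma_append: "sigma (u@v) = sigma u @ sigma v" by (simp add: sigma_def)

lemma funpow_sigma_append: "(sigma^^m) (u@v) = (sigma^^m) u @ (sigma^^m) v"
  by (induction m) (simp_all add: sigma_append)

lemma fibA_Suc: "fibA (Suc m) = fibA m @ fibB m"
proof -
  have "(sigma^^Suc m) [La] = (sigma^^m) (sigma [La])"
    by (simp only: funpow_Suc_right o_apply)
  also have "sigma [La] = [La]@[Lb]" by (simp add: sigma_def)
  finally have "(sigma^^Suc m) [La] = (sigma^^m) ([La]@[Lb])" .
  then show ?thesis unfolding fibA_def fibB_def funpow_sigma_append by simp
qed

lemma fibB_Suc: "fibB (Suc m) = fibA m"
proof -
  have "(sigma^^Suc m) [Lb] = (sigma^^m) (sigma [Lb])"
    by (simp only: funpow_Suc_right o_apply)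
  also have "sigma [Lb] = [La]" by (simp add: sigma_def)
  finally have "(sigma^^Suc m) [Lb] = (sigma^^m) [La]" .
  then show ?thesis unfolding fibA_def fibB_def by simp
qed

lemma fibA0: "fibA 0 = [La]" and fibB0: "fibB 0 = [Lb]"
  by (simp_all add: fibA_def fibB_def)

lemma Cau_Nil: "Cau [] X = 0" by (simp add: Cau_def)

lemma Cau_Cons: "Cau (c#u) X = ind_a c + X * Cau u X"
  unfolding Cau_def length_Cons sum.lessThan_Suc_shift by (simp add: sum_distrib_left mult_ac)

lemma Cau_append: "Cau (u@v) X = Cau u X + X^length u * Cau v X"
  by (induction u) (simp_all add: Cau_Nil Cau_Cons algebra_simps)

lemma three_Suc: "3 * Suc k = Suc (Suc (Suc (3*k)))" by simp

lemma odd_len: "odd (length (fibA (3*k))) \<and> odd (length (fibB (3*k)))"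
proof (induction k)
  case 0 then show ?case by (simp add: fibA0 fibB0)
next
  case (Suc k) then show ?case unfolding three_Suc by (simp add: fibA_Suc fibB_Suc)
qed

lemma fibR_Suc: "fibR (Suc k) = fibR k @ fibS k @ fibT k @ fibT k"
  unfolding fibR_def fibS_def fibT_def three_Suc by (simp add: fibA_Suc fibB_Suc)
lemma fibS_Suc: "fibS (Suc k) = fibR k @ fibS k @ fibT k @ fibT k @ fibR k"
  unfolding fibR_def fibS_def fibT_def three_Suc by (simp add: fibA_Suc fibB_Suc)
lemma fibT_Suc: "fibT (Suc k) = fibR k @ fibS k @ fibT k @ fibR k"
  unfolding fibR_def fibS_def fibT_def three_Suc by (simp add: fibA_Suc fibB_Suc)

lemma even_lens: "even (length (fibR k)) \<and> even (length (fibS k)) \<and> even (length (fibT k))"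
  using odd_len[of k] by (simp add: fibR_def fibS_def fibT_def)

lemma lenB_aux: "fibA m \<noteq> []" by (induction m) (simp_all add: fibA0 fibA_Suc)

lemma lenB_pos: "length (fibB m) \<ge> 1"
  using lenB_aux by (cases m) (auto simp: fibB_Suc fibB0 Suc_le_eq)

lemma lenA_ge: "length (fibA m) \<ge> Suc m"
proof (induction m)
  case 0 then show ?case by (simp add: fibA0)
next
  case (Suc m) then show ?case using lenB_pos[of m] by (simp add: fibA_Suc)
qed

lemma fibA_ext: "\<exists>v. fibA (m+j) = fibA m @ v"
  by (induction j) (auto simp: fibA_Suc)

lemma fibA_prefix: "i < length (fibA m) \<Longrightarrow> fibA (m+j) ! i = fibA m ! i"
  using fibA_ext[of m j] by (auto simp: nth_append)

lemma fibw_A: "i < length (fibA m) \<Longrightarrow> fibw i = fibA m ! i"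
proof (cases "m \<le> Suc i")
  case True
  assume i: "i < length (fibA m)"
  have "fibA (m + (Suc i - m)) ! i = fibA m ! i" using fibA_prefix[OF i] .
  then show ?thesis using True by (simp add: fibw_def)
next
  case False
  assume i: "i < length (fibA m)"
  have i2: "i < length (fibA (Suc i))" using lenA_ge[of "Suc i"] by simp
  have "fibA (Suc i + (m - Suc i)) ! i = fibA (Suc i) ! i" using fibA_prefix[OF i2] .
  then show ?thesis using False by (simp add: fibw_def)
qed

lemma fibR_A: "fibR k = fibA (Suc (3*k))" by (simp add: fibR_def fibA_Suc)

lemma fibA_hd: "\<exists>v. fibA m = La # v"
  by (induction m) (auto simp: fibA0 fibA_Suc)

lemma fibB_hd: "m \<ge> 1 \<Longrightarrow> \<exists>v. fibB m = La # v"
  by (cases m) (simp_all add: fibB_Suc fibA_hd)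

lemma Cau_0: "Cau (La # v) 0 = 1" by (simp add: Cau_Cons ind_a_def)

definition P3 :: "nat \<Rightarrow> real \<Rightarrow> bool" where
  "P3 k X \<longleftrightarrow> Cau (fibR k) X > 0 \<and> Cau (fibS k) X > 0 \<and> Cau (fibT k) X > 0"
definition N3 :: "nat \<Rightarrow> real \<Rightarrow> bool" where
  "N3 k X \<longleftrightarrow> Cau (fibR k) X \<ge> 0 \<and> Cau (fibS k) X \<ge> 0 \<and> Cau (fibT k) X \<ge> 0"
definition Z3 :: "nat \<Rightarrow> real \<Rightarrow> bool" where
  "Z3 k X \<longleftrightarrow> Cau (fibR k) X = 0 \<and> Cau (fibS k) X = 0 \<and> Cau (fibT k) X = 0"

lemma alg_pos:
  fixes a b c d p q u :: real
  assumes "a > 0" "b \<ge> 0" "c \<ge> 0" "d \<ge> 0" "p \<ge> 0" "q \<ge> 0" "u \<ge> 0"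
  shows "a + p * (b + q * (c + u * d)) > 0"
  using assms by (simp add: add_pos_nonneg)

lemma alg_nonneg:
  fixes a b c d p q u :: real
  assumes "a \<ge> 0" "b \<ge> 0" "c \<ge> 0" "d \<ge> 0" "p \<ge> 0" "q \<ge> 0" "u \<ge> 0"
  shows "a + p * (b + q * (c + u * d)) \<ge> 0"
  using assms by simp

lemma alg_zero:
  fixes a b c d p q u :: real
  assumes "a \<ge> 0" "b \<ge> 0" "c \<ge> 0" "d \<ge> 0" "p > 0" "q > 0" "u > 0"
    and "a + p * (b + q * (c + u * d)) \<le> 0"
  shows "a = 0 \<and> b = 0 \<and> c = 0"
proof -
  have "u * d \<ge> 0" using assms by simp
  then have h1: "c + u * d \<ge> 0" using assms by simp
  then have "q * (c + u * d) \<ge> 0" using assms by simp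
  then have h2: "b + q * (c + u * d) \<ge> 0" using assms by simp
  then have h3: "p * (b + q * (c + u * d)) \<ge> 0" using assms by simp
  have a0: "a = 0" using h3 assms by linarith
  have "p * (b + q * (c + u * d)) = 0" using h3 assms a0 by linarith
  then have e2: "b + q * (c + u * d) = 0" using assms by simp
  then have b0: "b = 0" using \<open>q * (c + u * d) \<ge> 0\<close> assms by linarith
  then have "q * (c + u * d) = 0" using e2 by simp
  then have e3: "c + u*d = 0" using assms by simp
  then have "c = 0" using \<open>u * d \<ge> 0\<close> assms by linarith
  then show ?thesis using a0 b0 by simp
qed

lemma Cau_R_Suc: "Cau (fibR (Suc k)) X = Cau (fibR k) X + X ^ length (fibR k) * (Cau (fibS k) X
   + X ^ length (fibS k) * (Cau (fibT k) X + X ^ length (fibT k) * Cau (fibT k) X))"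
  by (simp add: fibR_Suc Cau_append)
lemma Cau_S_Suc: "Cau (fibS (Suc k)) X = Cau (fibR k) X + X ^ length (fibR k) * (Cau (fibS k) X
   + X ^ length (fibS k) * (Cau (fibT k) X + X ^ length (fibT k) * Cau (fibT k @ fibR k) X))"
  by (simp add: fibS_Suc Cau_append)
lemma Cau_T_Suc: "Cau (fibT (Suc k)) X = Cau (fibR k) X + X ^ length (fibR k) * (Cau (fibS k) X
   + X ^ length (fibS k) * (Cau (fibT k) X + X ^ length (fibT k) * Cau (fibR k) X))"
  by (simp add: fibT_Suc Cau_append)

lemma even_pows: "0 \<le> X ^ length (fibR k) \<and> 0 \<le> X ^ length (fibS k) \<and> 0 \<le> (X::real) ^ length (fibT k)"
  using even_lens[of k] by (simp add: zero_le_even_power)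

lemma even_pows_pos: "(X::real) \<noteq> 0 \<Longrightarrow> 0 < X ^ length (fibR k) \<and> 0 < X ^ length (fibS k) \<and> 0 < X ^ length (fibT k)"
  using even_pows[of X k] by (simp add: order_le_less)

lemma Cau_TR_nonneg: "N3 k X \<Longrightarrow> Cau (fibT k @ fibR k) X \<ge> 0"
  using even_pows[of X k] by (simp add: Cau_append N3_def)

lemma step_pos: "P3 k X \<Longrightarrow> P3 (Suc k) X"
proof -
  assume P: "P3 k X"
  then have N: "N3 k X" by (auto simp: P3_def N3_def)
  show ?thesis unfolding P3_def Cau_R_Suc Cau_S_Suc Cau_T_Suc
    using P even_pows[of X k] Cau_TR_nonneg[OF N]
    by (auto simp: P3_def intro!: alg_pos)
qed

lemma step_nonneg: "N3 k X \<Longrightarrow> N3 (Suc k) X"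
proof -
  assume N: "N3 k X"
  show ?thesis unfolding N3_def Cau_R_Suc Cau_S_Suc Cau_T_Suc
    using N even_pows[of X k] Cau_TR_nonneg[OF N]
    by (auto simp: N3_def intro!: alg_nonneg)
qed

lemma step_zero: "Z3 k X \<Longrightarrow> Z3 (Suc k) X"
  unfolding Z3_def Cau_R_Suc Cau_S_Suc Cau_T_Suc by (simp add: Cau_append)

lemma back_zero: "N3 k X \<Longrightarrow> X \<noteq> 0 \<Longrightarrow> \<not> P3 (Suc k) X \<Longrightarrow> Z3 k X"
proof -
  assume N: "N3 k X" and X: "X \<noteq> 0" and nP: "\<not> P3 (Suc k) X"
  note pp = even_pows_pos[OF X, of k]
  have TR: "Cau (fibT k @ fibR k) X \<ge> 0" using Cau_TR_nonneg[OF N] .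
  have Nk: "Cau (fibR k) X \<ge> 0" "Cau (fibS k) X \<ge> 0" "Cau (fibT k) X \<ge> 0" using N by (auto simp: N3_def)
  from nP consider "Cau (fibR (Suc k)) X \<le> 0" | "Cau (fibS (Suc k)) X \<le> 0" | "Cau (fibT (Suc k)) X \<le> 0"
    unfolding P3_def by linarith
  then show ?thesis
  proof cases
    case 1 then show ?thesis unfolding Z3_def Cau_R_Suc using alg_zero[OF Nk Nk(3)] pp by blast
  next
    case 2 then show ?thesis unfolding Z3_def Cau_S_Suc using alg_zero[OF Nk TR] pp by blast
  next
    case 3 then show ?thesis unfolding Z3_def Cau_T_Suc using alg_zero[OF Nk Nk(1)] pp by blast
  qed
qed


definition G :: "nat \<Rightarrow> real set" where
  "G k = {s \<in> {-1..<0}. \<forall>X\<in>{s<..<0}. P3 k X}"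

lemma alpha_G: "alpha k = Inf (G k)"
  unfolding alpha_def G_def P3_def by simp

lemma G_bdd: "bdd_below (G k)"
  unfolding G_def by (rule bdd_belowI[of _ "-1"]) auto

lemma Cau_cont: "isCont (Cau u) x"
  unfolding Cau_def by (intro continuous_intros)

lemma Cau_tendsto: "(Cau u \<longlongrightarrow> Cau u x) (at x within S)"
  using continuous_at_imp_continuous_at_within[OF Cau_cont[where u=u and x=x], of S]
  unfolding continuous_within .

lemma P3_0: "k \<ge> 1 \<Longrightarrow> P3 k 0"
proof -
  assume k: "k \<ge> 1"
  obtain v where v: "fibA (3*k) = La # v" using fibA_hd by blast
  obtain w where w: "fibB (3*k) = La # w" using fibB_hd[of "3*k"] k by auto
  show ?thesis unfolding P3_def fibR_def fibS_def fibT_def v w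
    by (simp add: Cau_0)
qed

lemma P3_left: "P3 k x \<Longrightarrow> \<exists>b<x. \<forall>y. b < y \<and> y < x \<longrightarrow> P3 k y"
proof -
  assume P: "P3 k x"
  have e: "eventually (\<lambda>y. P3 k y) (at_left x)"
    unfolding P3_def
    using P unfolding P3_def
    by (intro eventually_conj order_tendstoD(1)[OF Cau_tendsto]) auto
  obtain b where "b < x" "\<forall>y>b. y < x \<longrightarrow> P3 k y"
    using e eventually_at_left[of "x - 1" x] by auto
  then show ?thesis by auto
qed

lemma G_ne: "k \<ge> 1 \<Longrightarrow> G k \<noteq> {}"
proof -
  assume k: "k \<ge> 1"
  obtain b where b: "b < 0" "\<forall>y. b < y \<and> y < 0 \<longrightarrow> P3 k y" using P3_left[OF P3_0[OF k]] by blast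
  have "max b (-1) \<in> G k" unfolding G_def using b by auto
  then show ?thesis by blast
qed

lemma alpha_bounds: "k \<ge> 1 \<Longrightarrow> -1 \<le> alpha k \<and> alpha k < 0"
proof -
  assume k: "k \<ge> 1"
  obtain s where s: "s \<in> G k" using G_ne[OF k] by blast
  have "-1 \<le> alpha k" unfolding alpha_G using G_ne[OF k]
    by (rule cInf_greatest) (auto simp: G_def)
  moreover have "alpha k \<le> s" unfolding alpha_G by (rule cInf_lower[OF s G_bdd])
  moreover have "s < 0" using s by (auto simp: G_def)
  ultimately show ?thesis by simp
qed

lemma alpha_pos: "k \<ge> 1 \<Longrightarrow> alpha k < X \<Longrightarrow> X < 0 \<Longrightarrow> P3 k X"
proof -
  assume k: "k \<ge> 1" and X: "alpha k < X" "X < 0"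
  obtain s where "s \<in> G k" "s < X" using X(1) cInf_less_iff[OF G_ne[OF k] G_bdd] unfolding alpha_G by auto
  then show ?thesis using X(2) by (auto simp: G_def)
qed

lemma alpha_mono: "k \<ge> 1 \<Longrightarrow> alpha (Suc k) \<le> alpha k"
  unfolding alpha_G
proof (rule cInf_superset_mono[OF G_ne G_bdd])
  show "G k \<subseteq> G (Suc k)" unfolding G_def using step_pos by auto
qed

lemma alpha_mono_chain: assumes "n \<ge> 1" "m \<ge> n" shows "alpha m \<le> alpha n"
  using assms(2)
proof (induction m rule: dec_induct)
  case base then show ?case by simp
next
  case (step m) then show ?case using alpha_mono[of m] assms(1) by simp
qed

lemma alpha_nonneg_at: "k \<ge> 1 \<Longrightarrow> N3 k (alpha k)"
proof -
  assume k: "k \<ge> 1"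
  have ev: "eventually (\<lambda>y. P3 k y) (at_right (alpha k))"
    using eventually_at_right_real[of "alpha k" 0] alpha_bounds[OF k]
    by (auto elim!: eventually_mono intro: alpha_pos[OF k])
  have "\<And>u. u \<in> {fibR k, fibS k, fibT k} \<Longrightarrow> 0 \<le> Cau u (alpha k)"
  proof -
    fix u assume u: "u \<in> {fibR k, fibS k, fibT k}"
    show "0 \<le> Cau u (alpha k)"
    proof (rule tendsto_lowerbound[OF Cau_tendsto])
      show "eventually (\<lambda>y. 0 \<le> Cau u y) (at_right (alpha k))"
        using ev u by (auto elim!: eventually_mono simp: P3_def)
    qed simp
  qed
  then show ?thesis unfolding N3_def by auto
qed

lemma alpha_equal_zero:
  assumes k: "k \<ge> 1" and eq: "alpha (Suc k) = alpha k" and gt: "alpha k > -1"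
  shows "Z3 k (alpha k)"
proof -
  define a where "a = alpha k"
  have a0: "a < 0" using alpha_bounds[OF k] a_def by simp
  have nP: "\<not> P3 (Suc k) a"
  proof
    assume P: "P3 (Suc k) a"
    obtain b where b: "b < a" "\<forall>y. b < y \<and> y < a \<longrightarrow> P3 (Suc k) y" using P3_left[OF P] by blast
    define s where "s = max b (-1)"
    have sa: "s < a" using b gt a_def s_def by simp
    have "s \<in> G (Suc k)" unfolding G_def
    proof (safe)
      show "s \<in> {-1..<0}" using sa a0 s_def by simp
      fix X assume X: "X \<in> {s<..<0}"
      show "P3 (Suc k) X"
      proof (cases X a rule: linorder_cases)
        case less then show ?thesis using b X s_def by auto
      next
        case equal then show ?thesis using P by simp
      next
        case greater then show ?thesis using alpha_pos[of "Suc k" X] eq a_def X k by auto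
      qed
    qed
    then have "alpha (Suc k) \<le> s" unfolding alpha_G by (rule cInf_lower[OF _ G_bdd])
    then show False using sa eq a_def by simp
  qed
  show ?thesis using back_zero[OF alpha_nonneg_at[OF k] _ nP[unfolded a_def]] a0 a_def by simp
qed


lemma Ca_summable: "\<bar>X\<bar> < 1 \<Longrightarrow> summable (\<lambda>i. ind_a (fibw i) * (X::real) ^ i)"
proof (rule summable_comparison_test[OF _ summable_geometric[of "\<bar>X\<bar>"]])
  show "\<exists>N. \<forall>n\<ge>N. norm (ind_a (fibw n) * X ^ n) \<le> \<bar>X\<bar> ^ n"
    by (auto simp: ind_a_def abs_mult power_abs)
qed simp

lemma Cau_R_partial: "Cau (fibR k) X = (\<Sum>i<length (fibR k). ind_a (fibw i) * X ^ i)"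
  unfolding Cau_def fibR_A by (intro sum.cong refl) (simp add: fibw_A)

lemma lenR_mono: "strict_mono (\<lambda>k. length (fibR k))"
  unfolding strict_mono_Suc_iff
proof
  fix k
  have "length (fibS k) \<ge> 1" using fibA_hd[of "3*k"] by (auto simp: fibS_def)
  then show "length (fibR k) < length (fibR (Suc k))" unfolding fibR_Suc length_append by linarith
qed

lemma Ca_lim: "\<bar>X\<bar> < 1 \<Longrightarrow> (\<lambda>k. Cau (fibR k) X) \<longlonglongrightarrow> Ca X"
  using LIMSEQ_subseq_LIMSEQ[OF summable_LIMSEQ[OF Ca_summable] lenR_mono]
  unfolding Ca_def o_def Cau_R_partial .

lemma Ca_pos_nonneg: "0 \<le> X \<Longrightarrow> X < 1 \<Longrightarrow> Ca X > 0"
  unfolding Ca_def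
proof (rule suminf_pos2[where i=0])
  assume X: "0 \<le> X" "X < 1"
  show "summable (\<lambda>i. ind_a (fibw i) * X ^ i)" using X by (intro Ca_summable) simp
  show "\<And>n. 0 \<le> ind_a (fibw n) * X ^ n" using X by (simp add: ind_a_def)
  have "fibA 1 = [La, Lb]" using fibA_Suc[of 0] by (simp add: fibA0 fibB0)
  then show "0 < ind_a (fibw 0) * X ^ 0" by (simp add: fibw_def ind_a_def)
qed

lemma Ca_pos_neg:
  assumes n: "n \<ge> 1" and X: "alpha n < X" "X < 0"
  shows "Ca X > 0"
proof -
  have Pk: "P3 k X" if "k \<ge> n" for k
    using alpha_pos[of k X] alpha_mono_chain[OF n that] X n that by simp
  have mono: "Cau (fibR n) X \<le> Cau (fibR m) X" if "m \<ge> n" for m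
    using that
  proof (induction m rule: dec_induct)
    case base then show ?case by simp
  next
    case (step m)
    have N: "N3 m X" using Pk[OF step(1)] by (auto simp: P3_def N3_def)
    have "0 \<le> X ^ length (fibR m) * (Cau (fibS m) X
   + X ^ length (fibS m) * (Cau (fibT m) X + X ^ length (fibT m) * Cau (fibT m) X))"
      using N even_pows[of X m] by (simp add: N3_def)
    then show ?case using step(3) unfolding Cau_R_Suc by linarith
  qed
  have "\<bar>X\<bar> < 1" using X alpha_bounds[OF n] by simp
  then have "Cau (fibR n) X \<le> Ca X"
    using mono by (intro LIMSEQ_le_const[OF Ca_lim]) auto
  moreover have "Cau (fibR n) X > 0" using Pk[of n] by (simp add: P3_def)
  ultimately show ?thesis by simp
qed

lemma Ca_gt: "n \<ge> 1 \<Longrightarrow> X \<in> {alpha n<..<1} \<Longrightarrow> Ca X > 0"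
  using Ca_pos_neg[of n X] Ca_pos_nonneg[of X] by (cases "X < 0") auto

lemma Ca_zero:
  assumes "\<bar>a\<bar> < 1" and Z: "\<forall>m\<ge>n. Z3 m a"
  shows "Ca a = 0"
proof -
  have "eventually (\<lambda>k. Cau (fibR k) a = 0) sequentially"
    using Z by (auto simp: Z3_def eventually_sequentially)
  then have "(\<lambda>k. 0) \<longlonglongrightarrow> Ca a"
    by (rule Lim_transform_eventually[OF Ca_lim[OF assms(1)]])
  then show ?thesis using LIMSEQ_const_iff by metis
qed


lemma zero_prop:
  assumes "Z3 n a" "m \<ge> n" shows "Z3 m a"
  using assms(2)
proof (induction m rule: dec_induct)
  case base then show ?case using assms(1) by simp
next
  case (step m) then show ?case using step_zero by simp
qed

theorem proposition5p9:
  fixes n :: nat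
  assumes "n \<ge> 1"
  shows "alpha (Suc n) \<le> alpha n
    \<and> (alpha (Suc n) = alpha n \<longleftrightarrow>
         ((\<forall>m\<ge>n. alpha m = -1)
          \<or> ((\<forall>m\<ge>n. alpha m = alpha n) \<and> alpha n > -1
             \<and> (\<forall>m\<ge>n. Cau (fibR m) (alpha m) = 0 \<and> Cau (fibS m) (alpha m) = 0
                          \<and> Cau (fibT m) (alpha m) = 0))))
    \<and> ((\<forall>m\<ge>n. alpha m = -1) \<longrightarrow> (\<forall>X\<in>{-1<..<1}. Ca X > 0))
    \<and> (((\<forall>m\<ge>n. alpha m = alpha n) \<and> alpha n > -1
         \<and> (\<forall>m\<ge>n. Cau (fibR m) (alpha m) = 0 \<and> Cau (fibS m) (alpha m) = 0
                      \<and> Cau (fibT m) (alpha m) = 0))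
       \<longrightarrow> Ca (alpha n) = 0 \<and> (\<forall>X\<in>{alpha n<..<1}. Ca X > 0))"
proof -
  note n = assms
  have hA: "-1 \<le> alpha m \<and> alpha m < 0 \<and> alpha m \<le> alpha n" if "m \<ge> n" for m
    using alpha_bounds[of m] alpha_mono_chain[OF n that] n that by simp
  have mono: "alpha (Suc n) \<le> alpha n" using alpha_mono[OF n] .
  have caseb: "(\<forall>m\<ge>n. alpha m = alpha n) \<and> (\<forall>m\<ge>n. Cau (fibR m) (alpha m) = 0 \<and> Cau (fibS m) (alpha m) = 0
                          \<and> Cau (fibT m) (alpha m) = 0)"
    if eq: "alpha (Suc n) = alpha n" and gt: "alpha n > -1"
  proof -
    have Z: "Z3 m (alpha n)" if "m \<ge> n" for m
      using zero_prop[OF alpha_equal_zero[OF n eq gt] that] .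
    have E: "alpha m = alpha n" if m: "m \<ge> n" for m
    proof (rule ccontr)
      assume "alpha m \<noteq> alpha n"
      then have "alpha m < alpha n" using hA[OF m] by simp
      then have "P3 m (alpha n)" using alpha_pos[of m "alpha n"] hA[of n] n m by simp
      then show False using Z[OF m] by (simp add: P3_def Z3_def)
    qed
    show ?thesis
    proof (intro conjI allI impI)
      fix m :: nat assume m: "m \<ge> n"
      show "alpha m = alpha n" using E[OF m] .
      show "Cau (fibR m) (alpha m) = 0" "Cau (fibS m) (alpha m) = 0" "Cau (fibT m) (alpha m) = 0"
        using Z[OF m] unfolding E[OF m] Z3_def by simp_all
    qed
  qed
  have casea: "\<forall>m\<ge>n. alpha m = -1" if a1: "alpha n = -1"
  proof (intro allI impI)
    fix m assume "m \<ge> n"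
    from hA[OF this] a1 show "alpha m = -1" by linarith
  qed
  have iff: "alpha (Suc n) = alpha n \<longleftrightarrow>
         ((\<forall>m\<ge>n. alpha m = -1)
          \<or> ((\<forall>m\<ge>n. alpha m = alpha n) \<and> alpha n > -1
             \<and> (\<forall>m\<ge>n. Cau (fibR m) (alpha m) = 0 \<and> Cau (fibS m) (alpha m) = 0
                          \<and> Cau (fibT m) (alpha m) = 0)))"
  proof
    assume eq: "alpha (Suc n) = alpha n"
    show "(\<forall>m\<ge>n. alpha m = -1)
          \<or> ((\<forall>m\<ge>n. alpha m = alpha n) \<and> alpha n > -1
             \<and> (\<forall>m\<ge>n. Cau (fibR m) (alpha m) = 0 \<and> Cau (fibS m) (alpha m) = 0
                          \<and> Cau (fibT m) (alpha m) = 0))"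
    proof (cases "alpha n = -1")
      case True then show ?thesis using casea by blast
    next
      case False
      then have "alpha n > -1" using hA[of n] by simp
      then show ?thesis using caseb[OF eq \<open>alpha n > -1\<close>] by blast
    qed
  next
    assume "(\<forall>m\<ge>n. alpha m = -1)
          \<or> ((\<forall>m\<ge>n. alpha m = alpha n) \<and> alpha n > -1
             \<and> (\<forall>m\<ge>n. Cau (fibR m) (alpha m) = 0 \<and> Cau (fibS m) (alpha m) = 0
                          \<and> Cau (fibT m) (alpha m) = 0))"
    then show "alpha (Suc n) = alpha n"
    proof
      assume "\<forall>m\<ge>n. alpha m = -1"
      then have "alpha (Suc n) = -1" "alpha n = -1" by auto
      then show ?thesis by simp
    next
      assume "(\<forall>m\<ge>n. alpha m = alpha n) \<and> alpha n > -1
             \<and> (\<forall>m\<ge>n. Cau (fibR m) (alpha m) = 0 \<and> Cau (fibS m) (alpha m) = 0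
                          \<and> Cau (fibT m) (alpha m) = 0)"
      then have "\<forall>m\<ge>n. alpha m = alpha n" by (rule conjunct1)
      moreover have "Suc n \<ge> n" by simp
      ultimately show ?thesis by blast
    qed
  qed
  have p3: "(\<forall>m\<ge>n. alpha m = -1) \<longrightarrow> (\<forall>X\<in>{-1<..<1}. Ca X > 0)"
  proof (intro impI ballI)
    fix X :: real assume "\<forall>m\<ge>n. alpha m = -1" "X \<in> {-1<..<1}"
    then have "X \<in> {alpha n<..<1}" by simp
    then show "Ca X > 0" using Ca_gt[OF n] by blast
  qed
  have p4: "((\<forall>m\<ge>n. alpha m = alpha n) \<and> alpha n > -1
         \<and> (\<forall>m\<ge>n. Cau (fibR m) (alpha m) = 0 \<and> Cau (fibS m) (alpha m) = 0
                      \<and> Cau (fibT m) (alpha m) = 0))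
       \<longrightarrow> Ca (alpha n) = 0 \<and> (\<forall>X\<in>{alpha n<..<1}. Ca X > 0)"
  proof
    assume H: "(\<forall>m\<ge>n. alpha m = alpha n) \<and> alpha n > -1
         \<and> (\<forall>m\<ge>n. Cau (fibR m) (alpha m) = 0 \<and> Cau (fibS m) (alpha m) = 0
                      \<and> Cau (fibT m) (alpha m) = 0)"
    have Z: "\<forall>m\<ge>n. Z3 m (alpha n)"
    proof (intro allI impI)
      fix m :: nat assume m: "m \<ge> n"
      have e: "alpha m = alpha n" using H m by blast
      have "Cau (fibR m) (alpha m) = 0 \<and> Cau (fibS m) (alpha m) = 0 \<and> Cau (fibT m) (alpha m) = 0"
        using H m by blast
      then show "Z3 m (alpha n)" unfolding Z3_def e .
    qed
    have "alpha n > -1" using H by blast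
    then have "\<bar>alpha n\<bar> < 1" using hA[of n] by simp
    then have "Ca (alpha n) = 0" by (rule Ca_zero[OF _ Z])
    moreover have "\<forall>X\<in>{alpha n<..<1}. Ca X > 0" using Ca_gt[OF n] by blast
    ultimately show "Ca (alpha n) = 0 \<and> (\<forall>X\<in>{alpha n<..<1}. Ca X > 0)" by (rule conjI)
  qed
  show ?thesis by (rule conjI[OF mono conjI[OF iff conjI[OF p3 p4]]])
qed

end
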